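(* (1) Let $1\le i,j\le d$ with $i\ne j$ and $m,n\in\mathbb Z_{<0}$. Then there is $\alpha\in\mathbb C\setminus\{0\}$ with $v^{ij}(m,n)\mathbf 1=\alpha\,L_r^{ii}(-1)^{-m-1}L_r^{jj}(-1)^{-n-1}L_r^{ij}(-2)\mathbf 1$ in $M_r$. (2) Let $1\le i\le d$ and $m,n\in\mathbb Z_{<0}$ with $m\le -2$, and let $1\le j\le d$ with $j\ne i$ be arbitrary. Then there is $\beta\in\mathbb C\setminus\{0\}$ with $v^{ii}(m,n)\mathbf 1=\beta\,L_r^{ii}(0)L_r^{ij}(-1)L_r^{ii}(-1)^{-n-1}L_r^{jj}(-1)^{-m-2}L_r^{ij}(-2)\mathbf 1$.
   Context: Fix an integer $d\ge 2$ and $r\in\mathbb{C}$. Let $\hat{\mathfrak h}$ be the complex Lie algebra with basis $\{v^i(m)\mid 1\le i\le d,\ m\in\mathbb{Z}\}\cup\{\mathbf c\}$ and bracket $[v^i(m),v^j(n)]=\delta_{m+n,0}\delta_{i,j}\,m\,\mathbf c$, $[\mathbf c,\hat{\mathfrak h}]=0$. In $A=U(\hat{\mathfrak h})/\langle \mathbf c-1\rangle$ let $v^{ij}(m,n)$ be the image of $v^i(m)v^j(n)$; then $v^{ij}(m,n)=v^{ji}(n,m)$ unless $i=j$ and $m=-n$, and $v^{ii}(m,-m)=v^{ii}(-m,m)+m$. Let $\mathcal B=\{v^{ii}(m,n)\mid 1\le i\le d,\ m\le n\}\cup\{v^{ij}(m,n)\mid 1\le i<j\le d,\ m,n\in\mathbb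 Z\}$; then $\mathcal B\cup\{1\}$ is linearly independent, $\mathcal L:=\mathrm{span}_{\mathbb C}\mathcal B\oplus\mathbb C\subset A$ contains every $v^{ij}(m,n)$ and is closed under $[x,y]=xy-yx$. With $\pi_1,\pi_2$ the projections of $\mathcal L$ onto $\mathrm{span}\,\mathcal B$ and onto $\mathbb C$, $[x,y]_r=\pi_1([x,y])+r\pi_2([x,y])$ is a Lie bracket on $\mathcal L$; call this Lie algebra $\mathcal L_r$. Let $\mathcal B_+=\{v^{ij}(m,n)\in\mathcal B\mid m\ge 0\text{ or }n\ge 0\}$, $\mathcal L_r^+=\mathrm{span}\,\mathcal B_+\oplus\mathbb C$, and $M_r=U(\mathcal L_r)\otimes_{U(\mathcal L_r^+)}\mathbb C\mathbf 1$, where $\mathcal B_+$ acts by $0$ on $\mathbf 1$ and $s\in\mathbb C\subset\mathcal L_r$ acts by the scalar $s$. Define operators on $M_r$: $L_r^{ij}(m)=\frac12\sum_{h\in\mathbb Z}v^{ij}(m-h,h)$ if $i\ne j$ or $m\ne0$, and $L_r^{ii}(0)=\frac12 v^{ii}(0,0)+\sum_{h>0}v^{ii}(-h,h)$ (on each vector only finitely many terms are nonzero). *)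

theory Defs
  imports Complex_Main
begin

text \<open>Generators: V i j m n stands for the basis element v^{ij}(m,n) of B,
  Cg stands for the element 1 of the summand C of L_r.\<close>
datatype gen = V nat nat int int | Cg

fun isB :: "nat \<Rightarrow> gen \<Rightarrow> bool" where
  "isB d (V i j m n) = (1 \<le> i \<and> i \<le> d \<and> 1 \<le> j \<and> j \<le> d \<and> (i < j \<or> (i = j \<and> m \<le> n)))"
| "isB d Cg = True"

fun posB :: "gen \<Rightarrow> bool" where
  "posB (V i j m n) = (0 \<le> m \<or> 0 \<le> n)"
| "posB Cg = False"

definition ind :: "gen \<Rightarrow> gen \<Rightarrow> complex" where
  "ind g = (\<lambda>h. if h = g then 1 else 0)"

text \<open>The element v^{ij}(m,n) of L (image of v^i(m)v^j(n) in A), written in the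
  basis B \<union> {1}, using v^{ij}(m,n)=v^{ji}(n,m) unless i=j, m=-n, and
  v^{ii}(m,-m)=v^{ii}(-m,m)+m.\<close>
definition Lv :: "nat \<Rightarrow> int \<Rightarrow> nat \<Rightarrow> int \<Rightarrow> gen \<Rightarrow> complex" where
  "Lv i m j n =
     (if i < j then ind (V i j m n)
      else if j < i then ind (V j i n m)
      else if m \<le> n then ind (V i i m n)
      else (\<lambda>g. ind (V i i n m) g + (if m + n = 0 then of_int m * ind Cg g else 0)))"

text \<open>Heisenberg bracket [v^i(a), v^j(b)] = delta_{ij} delta_{a+b,0} a (with c = 1).\<close>
definition hb :: "nat \<Rightarrow> int \<Rightarrow> nat \<Rightarrow> int \<Rightarrow> complex" where
  "hb i a j b = (if i = j \<and> a + b = 0 then of_int a else 0)"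

text \<open>Commutator in A of two basis elements of L, expanded by the Leibniz rule
  [ab,cd] = [b,c]ad + [b,d]ac + [a,c]db + [a,d]cb (the brackets of generators are
  central scalars), written in the basis B \<union> {1}.\<close>
fun brA :: "gen \<Rightarrow> gen \<Rightarrow> gen \<Rightarrow> complex" where
  "brA (V i j a b) (V k l c e) =
     (\<lambda>g. hb j b k c * Lv i a l e g + hb j b l e * Lv i a k c g
        + hb i a k c * Lv l e j b g + hb i a l e * Lv k c j b g)"
| "brA Cg _ = (\<lambda>g. 0)"
| "brA _ Cg = (\<lambda>g. 0)"

text \<open>The bracket [x,y]_r = pi_1([x,y]) + r pi_2([x,y]) on basis elements.\<close>
definition brr :: "complex \<Rightarrow> gen \<Rightarrow> gen \<Rightarrow> gen \<Rightarrow> complex" where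
  "brr r x y = (\<lambda>g. if g = Cg then r * brA x y Cg else brA x y g)"

text \<open>Elements of the tensor algebra are coefficient functions on words of generators.\<close>
type_synonym tens = "gen list \<Rightarrow> complex"

definition inF :: "nat \<Rightarrow> tens \<Rightarrow> bool" where
  "inF d p = (finite {w. p w \<noteq> 0} \<and> (\<forall>w. p w \<noteq> 0 \<longrightarrow> set w \<subseteq> {g. isB d g}))"

definition fmul :: "tens \<Rightarrow> tens \<Rightarrow> tens" where
  "fmul p q = (\<lambda>w. \<Sum>k\<in>{0..length w}. p (take k w) * q (drop k w))"

definition one :: tens where
  "one = (\<lambda>w. if w = [] then 1 else 0)"

definition gvec :: "gen \<Rightarrow> tens" where
  "gvec g = (\<lambda>w. if w = [g] then 1 else 0)"

definition emb :: "(gen \<Rightarrow> complex) \<Rightarrow> tens" where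
  "emb f = (\<lambda>w. case w of [g] \<Rightarrow> f g | _ \<Rightarrow> 0)"

definition lie_rel :: "complex \<Rightarrow> gen \<Rightarrow> gen \<Rightarrow> tens" where
  "lie_rel r x y = (\<lambda>w. fmul (gvec x) (gvec y) w - fmul (gvec y) (gvec x) w - emb (brr r x y) w)"

text \<open>J d r is the kernel of T(L_r) \<rightarrow> M_r = U(L_r) \<otimes>_{U(L_r^+)} C1:
  the two-sided ideal generated by x y - y x - [x,y]_r plus the left ideal generated
  by B_+ and by (1_L - 1).\<close>
inductive_set J :: "nat \<Rightarrow> complex \<Rightarrow> tens set" for d r where
  J_zero: "(\<lambda>w. 0) \<in> J d r"
| J_add: "x \<in> J d r \<Longrightarrow> y \<in> J d r \<Longrightarrow> (\<lambda>w. x w + y w) \<in> J d r"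
| J_smult: "x \<in> J d r \<Longrightarrow> (\<lambda>w. c * x w) \<in> J d r"
| J_lie: "isB d x \<Longrightarrow> isB d y \<Longrightarrow> inF d a \<Longrightarrow> inF d b \<Longrightarrow>
          fmul (fmul a (lie_rel r x y)) b \<in> J d r"
| J_pos: "isB d g \<Longrightarrow> posB g \<Longrightarrow> inF d a \<Longrightarrow> fmul a (gvec g) \<in> J d r"
| J_one: "inF d a \<Longrightarrow> fmul a (\<lambda>w. gvec Cg w - one w) \<in> J d r"

text \<open>Equality in M_r of the vectors represented by p and q.\<close>
definition Meq :: "nat \<Rightarrow> complex \<Rightarrow> tens \<Rightarrow> tens \<Rightarrow> bool" where
  "Meq d r p q = ((\<lambda>w. p w - q w) \<in> J d r)"

definition vact :: "nat \<Rightarrow> int \<Rightarrow> nat \<Rightarrow> int \<Rightarrow> tens \<Rightarrow> tens" where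
  "vact i m j n p = fmul (emb (Lv i m j n)) p"

text \<open>The operators L_r^{ij}(m): sums over the (finitely many) terms that are nonzero in M_r.\<close>
definition Lop :: "nat \<Rightarrow> complex \<Rightarrow> nat \<Rightarrow> nat \<Rightarrow> int \<Rightarrow> tens \<Rightarrow> tens" where
  "Lop d r i j m p =
    (if i \<noteq> j \<or> m \<noteq> 0 then
       (\<lambda>w. \<Sum>h\<in>{h. vact i (m - h) j h p \<notin> J d r}. (1/2) * vact i (m - h) j h p w)
     else
       (\<lambda>w. (1/2) * vact i 0 i 0 p w
            + (\<Sum>h\<in>{h. 0 < h \<and> vact i (- h) i h p \<notin> J d r}. vact i (- h) i h p w)))"

end

theory Submission
  imports Defs
begin


lemma J_diff: "x \<in> J d r \<Longrightarrow> y \<in> J d r \<Longrightarrow> (\<lambda>w. x w - y w) \<in> J d r"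
proof -
  assume a: "x \<in> J d r" "y \<in> J d r"
  have "(\<lambda>w. x w + (-1) * y w) \<in> J d r" by (intro J_add J_smult a)
  thus ?thesis by simp
qed

lemma J_sum: "finite S \<Longrightarrow> (\<forall>h\<in>S. f h \<in> J d r) \<Longrightarrow> (\<lambda>w. \<Sum>h\<in>S. f h w) \<in> J d r"
proof (induction S rule: finite_induct)
  case empty then show ?case using J_zero by simp
next
  case (insert x F)
  then have "(\<lambda>w. f x w + (\<Sum>h\<in>F. f h w)) \<in> J d r" by (intro J_add) auto
  then show ?case using insert by simp
qed

lemma Meq_refl: "Meq d r p p"
  unfolding Meq_def using J_zero by simp

lemma Meq_sym: "Meq d r p q \<Longrightarrow> Meq d r q p"
  unfolding Meq_def
proof -
  assume "(\<lambda>w. p w - q w) \<in> J d r"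
  then have "(\<lambda>w. (-1) * (p w - q w)) \<in> J d r" by (rule J_smult)
  thus "(\<lambda>w. q w - p w) \<in> J d r" by simp
qed

lemma Meq_trans: "Meq d r p q \<Longrightarrow> Meq d r q s \<Longrightarrow> Meq d r p s"
  unfolding Meq_def
proof -
  assume "(\<lambda>w. p w - q w) \<in> J d r" "(\<lambda>w. q w - s w) \<in> J d r"
  then have "(\<lambda>w. (p w - q w) + (q w - s w)) \<in> J d r" by (rule J_add)
  thus "(\<lambda>w. p w - s w) \<in> J d r" by simp
qed

lemma Meq_add: "Meq d r p q \<Longrightarrow> Meq d r p' q' \<Longrightarrow> Meq d r (\<lambda>w. p w + p' w) (\<lambda>w. q w + q' w)"
  unfolding Meq_def
proof -
  assume "(\<lambda>w. p w - q w) \<in> J d r" "(\<lambda>w. p' w - q' w) \<in> J d r"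
  then have "(\<lambda>w. (p w - q w) + (p' w - q' w)) \<in> J d r" by (rule J_add)
  thus "(\<lambda>w. p w + p' w - (q w + q' w)) \<in> J d r" by (simp add: algebra_simps)
qed

lemma Meq_smult: "Meq d r p q \<Longrightarrow> Meq d r (\<lambda>w. c * p w) (\<lambda>w. c * q w)"
  unfolding Meq_def
proof -
  assume "(\<lambda>w. p w - q w) \<in> J d r"
  then have "(\<lambda>w. c * (p w - q w)) \<in> J d r" by (rule J_smult)
  thus "(\<lambda>w. c * p w - c * q w) \<in> J d r" by (simp add: algebra_simps)
qed

lemma Meq_sum: "finite S \<Longrightarrow> (\<And>h. h \<in> S \<Longrightarrow> Meq d r (f h) (g h)) \<Longrightarrow>
   Meq d r (\<lambda>w. \<Sum>h\<in>S. f h w) (\<lambda>w. \<Sum>h\<in>S. g h w)"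
  unfolding Meq_def
proof -
  assume "finite S" "\<And>h. h \<in> S \<Longrightarrow> (\<lambda>w. f h w - g h w) \<in> J d r"
  then have "(\<lambda>w. \<Sum>h\<in>S. (\<lambda>w. f h w - g h w) w) \<in> J d r" by (intro J_sum) auto
  thus "(\<lambda>w. (\<Sum>h\<in>S. f h w) - (\<Sum>h\<in>S. g h w)) \<in> J d r" by (simp add: sum_subtractf)
qed

lemma Meq_zero_iff: "Meq d r x (\<lambda>w. 0) \<longleftrightarrow> x \<in> J d r"
  unfolding Meq_def by simp

lemma Meq_eq: "p = q \<Longrightarrow> Meq d r p q" using Meq_refl by simp

lemma fmul_emb: "fmul (emb f) p w = (case w of [] \<Rightarrow> 0 | g # u \<Rightarrow> f g * p u)"
proof (cases w)
  case Nil then show ?thesis by (simp add: fmul_def emb_def)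
next
  case (Cons g u)
  have "fmul (emb f) p w = (\<Sum>k\<in>{0..Suc (length u)}. emb f (take k (g#u)) * p (drop k (g#u)))"
    by (simp add: fmul_def Cons)
  also have "\<dots> = emb f (take 0 (g#u)) * p (drop 0 (g#u)) + (\<Sum>k\<in>{0..length u}. emb f (take (Suc k) (g#u)) * p (drop (Suc k) (g#u)))"
    by (simp only: sum.atLeast0_atMost_Suc_shift o_def)
  also have "\<dots> = (\<Sum>k\<in>{0..length u}. emb f (g # take k u) * p (drop k u))"
    by (simp add: emb_def)
  also have "\<dots> = emb f (g # take 0 u) * p (drop 0 u) + (\<Sum>k\<in>{Suc 0..length u}. emb f (g # take k u) * p (drop k u))"
    by (rule sum.atLeast_Suc_atMost) simp
  also have "(\<Sum>k\<in>{Suc 0..length u}. emb f (g # take k u) * p (drop k u)) = 0"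
  proof (rule sum.neutral, intro ballI)
    fix k assume "k \<in> {Suc 0..length u}"
    then have "take k u \<noteq> []" by auto
    then obtain x y where "take k u = x # y" by (cases "take k u") auto
    then show "emb f (g # take k u) * p (drop k u) = 0" by (simp add: emb_def)
  qed
  finally show ?thesis by (simp add: emb_def Cons)
qed

lemma fmul_one_left: "fmul one p = p"
proof
  fix w
  have "fmul one p w = (\<Sum>k\<in>{0..length w}. one (take k w) * p (drop k w))" by (simp add: fmul_def)
  also have "\<dots> = one (take 0 w) * p (drop 0 w) + (\<Sum>k\<in>{Suc 0..length w}. one (take k w) * p (drop k w))"
    by (rule sum.atLeast_Suc_atMost) simp
  also have "(\<Sum>k\<in>{Suc 0..length w}. one (take k w) * p (drop k w)) = 0"
    by (rule sum.neutral) (auto simp: one_def)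
  finally show "fmul one p w = p w" by (simp add: one_def)
qed

lemma fmul_one_right: "fmul p one = p"
proof
  fix w
  have "fmul p one w = (\<Sum>k\<in>{0..length w}. p (take k w) * one (drop k w))" by (simp add: fmul_def)
  also have "\<dots> = p (take (length w) w) * one (drop (length w) w) + (\<Sum>k\<in>{0..length w} - {length w}. p (take k w) * one (drop k w))"
    by (rule sum.remove) auto
  also have "(\<Sum>k\<in>{0..length w} - {length w}. p (take k w) * one (drop k w)) = 0"
    by (rule sum.neutral) (auto simp: one_def)
  finally show "fmul p one w = p w" by (simp add: one_def)
qed

lemma gvec_emb: "gvec g = emb (ind g)"
  by (rule ext, simp add: gvec_def emb_def ind_def split: list.split)

lemma fmul_emb_assoc: "fmul (emb f) (fmul a b) = fmul (fmul (emb f) a) b"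
proof
  fix w
  show "fmul (emb f) (fmul a b) w = fmul (fmul (emb f) a) b w"
  proof (cases w)
    case Nil then show ?thesis by (simp add: fmul_emb fmul_def[of "fmul (emb f) a"])
  next
    case (Cons g u)
    have "fmul (fmul (emb f) a) b w = (\<Sum>k\<in>{0..Suc (length u)}. fmul (emb f) a (take k (g#u)) * b (drop k (g#u)))"
      by (simp add: fmul_def[of "fmul (emb f) a"] Cons)
    also have "\<dots> = fmul (emb f) a (take 0 (g#u)) * b (drop 0 (g#u)) + (\<Sum>k\<in>{0..length u}. fmul (emb f) a (take (Suc k) (g#u)) * b (drop (Suc k) (g#u)))"
      by (simp only: sum.atLeast0_atMost_Suc_shift o_def)
    also have "\<dots> = (\<Sum>k\<in>{0..length u}. f g * (a (take k u) * b (drop k u)))"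
      by (simp add: fmul_emb mult.assoc)
    also have "\<dots> = fmul (emb f) (fmul a b) w"
      by (simp add: fmul_emb Cons fmul_def[of a b] sum_distrib_left)
    finally show ?thesis by simp
  qed
qed

lemma fmul_emb_lin: "fmul (emb f) (\<lambda>w. c1 * p w + c2 * q w) = (\<lambda>w. c1 * fmul (emb f) p w + c2 * fmul (emb f) q w)"
  by (rule ext, simp add: fmul_emb algebra_simps split: list.split)

lemma fmul_emb_smult: "fmul (emb f) (\<lambda>w. c * p w) = (\<lambda>w. c * fmul (emb f) p w)"
  by (rule ext, simp add: fmul_emb algebra_simps split: list.split)

lemma fmul_emb_add: "fmul (emb f) (\<lambda>w. p w + q w) = (\<lambda>w. fmul (emb f) p w + fmul (emb f) q w)"
  by (rule ext, simp add: fmul_emb algebra_simps split: list.split)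

lemma fmul_emb_zero: "fmul (emb f) (\<lambda>w. 0) = (\<lambda>w. 0)"
  by (rule ext, simp add: fmul_emb split: list.split)

definition goodf :: "nat \<Rightarrow> (gen \<Rightarrow> complex) \<Rightarrow> bool" where
  "goodf d f = (finite {g. f g \<noteq> 0} \<and> (\<forall>g. f g \<noteq> 0 \<longrightarrow> isB d g))"

lemma inF_emb_mul: assumes "goodf d f" "inF d a" shows "inF d (fmul (emb f) a)"
proof -
  have sub: "{w. fmul (emb f) a w \<noteq> 0} \<subseteq> (\<lambda>(g,u). g # u) ` ({g. f g \<noteq> 0} \<times> {w. a w \<noteq> 0})"
  proof
    fix w assume "w \<in> {w. fmul (emb f) a w \<noteq> 0}"
    then show "w \<in> (\<lambda>(g,u). g # u) ` ({g. f g \<noteq> 0} \<times> {w. a w \<noteq> 0})"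
      by (cases w) (auto simp: fmul_emb)
  qed
  have "finite ((\<lambda>(g,u). g # u) ` ({g. f g \<noteq> 0} \<times> {w. a w \<noteq> 0}))"
    using assms by (auto simp: goodf_def inF_def)
  then have f: "finite {w. fmul (emb f) a w \<noteq> 0}" using sub finite_subset by blast
  have "\<forall>w. fmul (emb f) a w \<noteq> 0 \<longrightarrow> set w \<subseteq> {g. isB d g}"
  proof (intro allI impI)
    fix w assume "fmul (emb f) a w \<noteq> 0"
    then show "set w \<subseteq> {g. isB d g}" using assms
      by (cases w) (auto simp: fmul_emb goodf_def inF_def)
  qed
  with f show ?thesis by (simp add: inF_def)
qed

lemma J_left: assumes "x \<in> J d r" "goodf d f" shows "fmul (emb f) x \<in> J d r"
  using assms(1)
proof (induction rule: J.induct)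
  case J_zero then show ?case by (simp add: fmul_emb_zero J.J_zero)
next
  case (J_add x y) then show ?case by (simp add: fmul_emb_add J.J_add)
next
  case (J_smult x c) then show ?case by (simp add: fmul_emb_smult J.J_smult)
next
  case (J_lie x y a b)
  have "fmul (emb f) (fmul (fmul a (lie_rel r x y)) b) = fmul (fmul (fmul (emb f) a) (lie_rel r x y)) b"
    by (simp add: fmul_emb_assoc)
  then show ?case using J_lie inF_emb_mul[OF assms(2)] by (simp add: J.J_lie)
next
  case (J_pos g a)
  have "fmul (emb f) (fmul a (gvec g)) = fmul (fmul (emb f) a) (gvec g)"
    by (simp add: fmul_emb_assoc)
  then show ?case using J_pos inF_emb_mul[OF assms(2)] by (simp add: J.J_pos)
next
  case (J_one a)
  have "fmul (emb f) (fmul a (\<lambda>w. gvec Cg w - one w)) = fmul (fmul (emb f) a) (\<lambda>w. gvec Cg w - one w)"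
    by (simp add: fmul_emb_assoc)
  then show ?case using J_one inF_emb_mul[OF assms(2)] by (simp add: J.J_one)
qed

lemma Meq_left: "Meq d r p q \<Longrightarrow> goodf d f \<Longrightarrow> Meq d r (fmul (emb f) p) (fmul (emb f) q)"
proof -
  assume a: "Meq d r p q" "goodf d f"
  have "fmul (emb f) (\<lambda>w. 1 * p w + (-1) * q w) \<in> J d r"
    using a J_left unfolding Meq_def by simp
  then show ?thesis unfolding Meq_def fmul_emb_lin by simp
qed

lemma inF_one: "inF d one"
proof -
  have "{w. one w \<noteq> 0} = {[]}" by (auto simp: one_def)
  then show ?thesis by (auto simp: inF_def one_def)
qed

lemma gvec_J: "isB d g \<Longrightarrow> posB g \<Longrightarrow> gvec g \<in> J d r"
  using J_pos[OF _ _ inF_one] by (simp add: fmul_one_left)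

lemma goodf_ind: "isB d g \<Longrightarrow> goodf d (ind g)"
proof -
  assume "isB d g"
  moreover have "{h. ind g h \<noteq> 0} = {g}" by (auto simp: ind_def)
  ultimately show ?thesis by (auto simp: goodf_def ind_def)
qed

lemma comm_J: assumes "isB d x" "isB d y" "gvec x \<in> J d r"
  shows "Meq d r (fmul (gvec x) (gvec y)) (emb (brr r x y))"
proof -
  have L: "lie_rel r x y \<in> J d r"
    using J_lie[OF assms(1,2) inF_one inF_one] by (simp add: fmul_one_left fmul_one_right)
  have "fmul (emb (ind y)) (gvec x) \<in> J d r" by (rule J_left[OF assms(3) goodf_ind[OF assms(2)]])
  then have "fmul (gvec y) (gvec x) \<in> J d r" by (simp add: gvec_emb)
  from J_add[OF L this] show ?thesis unfolding Meq_def lie_rel_def by simp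
qed



definition nrm :: "nat \<Rightarrow> int \<Rightarrow> nat \<Rightarrow> int \<Rightarrow> gen" where
  "nrm i a j b = (if i < j then V i j a b else if j < i then V j i b a else if a \<le> b then V i i a b else V i i b a)"

definition BR :: "nat \<Rightarrow> int \<Rightarrow> nat \<Rightarrow> int \<Rightarrow> nat \<Rightarrow> int \<Rightarrow> nat \<Rightarrow> int \<Rightarrow> gen \<Rightarrow> complex" where
  "BR i a j b k c l e = (\<lambda>g. hb j b k c * Lv i a l e g + hb j b l e * Lv i a k c g
        + hb i a k c * Lv l e j b g + hb i a l e * Lv k c j b g)"

lemma nrm_sym: "nrm j b i a = nrm i a j b"
  by (auto simp: nrm_def)

lemma isB_nrm: "1 \<le> i \<Longrightarrow> i \<le> d \<Longrightarrow> 1 \<le> j \<Longrightarrow> j \<le> d \<Longrightarrow> isB d (nrm i a j b)"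
  by (auto simp: nrm_def)

lemma posB_nrm: "posB (nrm i a j b) = (0 \<le> a \<or> 0 \<le> b)"
  by (auto simp: nrm_def)

lemma Lv_nrm: "\<not> (i = j \<and> a + b = 0 \<and> b < a) \<Longrightarrow> Lv i a j b = ind (nrm i a j b)"
  by (rule ext) (auto simp: Lv_def nrm_def)

lemma Lv_swap: "Lv i a j b g = Lv j b i a g + hb i a j b * ind Cg g"
  by (cases "b = -a") (auto simp: Lv_def hb_def ind_def)

lemma hb_anti: "hb j b i a = - hb i a j b"
  by (cases "b = -a") (auto simp: hb_def)

lemma BR_swap1: "BR j b i a k c l e = BR i a j b k c l e"
proof (rule ext)
  fix g
  have 1: "Lv l e i a g = Lv i a l e g - hb i a l e * ind Cg g" using Lv_swap[of i a l e g] by simp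
  have 2: "Lv k c i a g = Lv i a k c g - hb i a k c * ind Cg g" using Lv_swap[of i a k c g] by simp
  have 3: "Lv j b l e g = Lv l e j b g + hb j b l e * ind Cg g" using Lv_swap[of j b l e g] by simp
  have 4: "Lv j b k c g = Lv k c j b g + hb j b k c * ind Cg g" using Lv_swap[of j b k c g] by simp
  show "BR j b i a k c l e g = BR i a j b k c l e g"
    unfolding BR_def 1 2 3 4 by (simp add: algebra_simps)
qed

lemma BR_swap1': "BR j b i a = BR i a j b"
  using BR_swap1 by blast

lemma BR_swap2: "BR i a j b l e k c = BR i a j b k c l e"
  unfolding BR_def by (rule ext) (simp add: algebra_simps)

lemma brA_V: "brA (V i j a b) (V k l c e) = BR i a j b k c l e"
  by (simp add: BR_def)

lemma brA_nrm: "brA (nrm i a j b) (nrm k c l e) = BR i a j b k c l e"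
proof -
  have A: "\<exists>i' a' j' b'. nrm i a j b = V i' j' a' b' \<and> BR i' a' j' b' = BR i a j b"
    unfolding nrm_def using BR_swap1' by auto
  have B: "\<And>i' a' j' b'. \<exists>k' c' l' e'. nrm k c l e = V k' l' c' e' \<and> BR i' a' j' b' k' c' l' e' = BR i' a' j' b' k c l e"
    unfolding nrm_def using BR_swap2 by auto
  from A obtain i' a' j' b' where a: "nrm i a j b = V i' j' a' b'" "BR i' a' j' b' = BR i a j b" by blast
  from B[of i' a' j' b'] obtain k' c' l' e' where b: "nrm k c l e = V k' l' c' e'" "BR i' a' j' b' k' c' l' e' = BR i' a' j' b' k c l e" by blast
  have "brA (nrm i a j b) (nrm k c l e) = BR i' a' j' b' k' c' l' e'" using a(1) b(1) brA_V by simp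
  also have "\<dots> = BR i' a' j' b' k c l e" using b(2) .
  also have "\<dots> = BR i a j b k c l e" using a(2) by simp
  finally show ?thesis .
qed

lemma Lv_alt: "Lv i a j b = (\<lambda>g. ind (nrm i a j b) g + (if i = j \<and> a + b = 0 \<and> b < a then of_int a else 0) * ind Cg g)"
  by (rule ext) (simp add: Lv_def nrm_def)

lemma goodf_Lv: "1 \<le> i \<Longrightarrow> i \<le> d \<Longrightarrow> 1 \<le> j \<Longrightarrow> j \<le> d \<Longrightarrow> goodf d (Lv i a j b)"
proof -
  assume r: "1 \<le> i" "i \<le> d" "1 \<le> j" "j \<le> d"
  have s: "{g. Lv i a j b g \<noteq> 0} \<subseteq> {nrm i a j b, Cg}"
    unfolding Lv_alt by (auto simp: ind_def)
  then have "finite {g. Lv i a j b g \<noteq> 0}" by (rule finite_subset) simp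
  moreover have "\<forall>g. Lv i a j b g \<noteq> 0 \<longrightarrow> isB d g"
    using s isB_nrm[OF r] by auto
  ultimately show ?thesis by (simp add: goodf_def)
qed

lemma brr_eq: "brA x y Cg = 0 \<Longrightarrow> brr r x y = brA x y"
  by (rule ext) (simp add: brr_def)

lemma ACT:
  assumes r: "1 \<le> i" "i \<le> d" "1 \<le> j" "j \<le> d" "1 \<le> k" "k \<le> d" "1 \<le> l" "l \<le> d"
    and pX: "\<not> (i = j \<and> a + b = 0 \<and> b < a)" and pos: "0 \<le> a \<or> 0 \<le> b"
    and cg: "BR i a j b k c l e Cg = 0"
  shows "Meq d r (vact i a j b (gvec (nrm k c l e))) (emb (BR i a j b k c l e))"
proof -
  have g: "gvec (nrm i a j b) \<in> J d r"
    by (rule gvec_J) (use r pos in \<open>simp_all add: isB_nrm posB_nrm\<close>)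
  have "Meq d r (fmul (gvec (nrm i a j b)) (gvec (nrm k c l e))) (emb (brr r (nrm i a j b) (nrm k c l e)))"
    by (rule comm_J[OF isB_nrm isB_nrm g]) (use r in simp_all)
  moreover have "vact i a j b (gvec (nrm k c l e)) = fmul (gvec (nrm i a j b)) (gvec (nrm k c l e))"
    unfolding vact_def Lv_nrm[OF pX] gvec_emb ..
  moreover have "brr r (nrm i a j b) (nrm k c l e) = BR i a j b k c l e"
    using cg by (simp add: brr_eq brA_nrm)
  ultimately show ?thesis by simp
qed

lemma sum_diff_J:
  assumes "finite T" "S \<subseteq> T" "\<And>h. h \<in> T - S \<Longrightarrow> f h \<in> J d r"
  shows "Meq d r (\<lambda>w. \<Sum>h\<in>S. f h w) (\<lambda>w. \<Sum>h\<in>T. f h w)"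
proof -
  have "(\<lambda>w. \<Sum>h\<in>T - S. f h w) \<in> J d r" using assms by (intro J_sum) auto
  then have "Meq d r (\<lambda>w. \<Sum>h\<in>T - S. f h w) (\<lambda>w. 0)" by (simp add: Meq_zero_iff)
  then have "Meq d r (\<lambda>w. 0 + (\<Sum>h\<in>S. f h w)) (\<lambda>w. (\<Sum>h\<in>T - S. f h w) + (\<Sum>h\<in>S. f h w))"
    by (rule Meq_add[OF Meq_sym Meq_refl])
  moreover have "(\<lambda>w. (\<Sum>h\<in>T - S. f h w) + (\<Sum>h\<in>S. f h w)) = (\<lambda>w. \<Sum>h\<in>T. f h w)"
    using assms(1,2) by (intro ext) (simp add: sum.subset_diff[of S T])
  ultimately show ?thesis by simp
qed

lemma Lop_eval1:
  assumes ne: "i \<noteq> j \<or> m \<noteq> 0" and r: "1 \<le> i" "i \<le> d" "1 \<le> j" "j \<le> d"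
    and pq: "Meq d r p q" and F: "\<And>h. Meq d r (vact i (m-h) j h q) (F h)"
    and T: "finite T" "\<And>h. h \<notin> T \<Longrightarrow> F h = (\<lambda>w. 0)"
  shows "Meq d r (Lop d r i j m p) (\<lambda>w. \<Sum>h\<in>T. (1/2) * F h w)"
proof -
  have Vp: "Meq d r (vact i (m-h) j h p) (F h)" for h
    using Meq_trans[OF Meq_left[OF pq goodf_Lv[OF r]] F[unfolded vact_def]] unfolding vact_def .
  define S where "S = {h. vact i (m - h) j h p \<notin> J d r}"
  have ST: "S \<subseteq> T"
  proof
    fix h assume "h \<in> S"
    show "h \<in> T"
    proof (rule ccontr)
      assume "h \<notin> T"
      then have "Meq d r (vact i (m-h) j h p) (\<lambda>w. 0)" using Vp T(2) by metis
      then show False using \<open>h \<in> S\<close> by (simp add: Meq_zero_iff S_def)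
    qed
  qed
  have L: "Lop d r i j m p = (\<lambda>w. \<Sum>h\<in>S. (1/2) * vact i (m - h) j h p w)"
    using ne by (simp add: Lop_def S_def)
  have "Meq d r (\<lambda>w. \<Sum>h\<in>S. (\<lambda>h w. (1/2) * vact i (m - h) j h p w) h w) (\<lambda>w. \<Sum>h\<in>T. (\<lambda>h w. (1/2) * vact i (m - h) j h p w) h w)"
  proof (rule sum_diff_J[OF T(1) ST])
    fix h assume "h \<in> T - S"
    then have "vact i (m - h) j h p \<in> J d r" by (simp add: S_def)
    then show "(\<lambda>w. (1/2) * vact i (m - h) j h p w) \<in> J d r" by (rule J_smult)
  qed
  moreover have "Meq d r (\<lambda>w. \<Sum>h\<in>T. (\<lambda>h w. (1/2) * vact i (m - h) j h p w) h w) (\<lambda>w. \<Sum>h\<in>T. (\<lambda>h w. (1/2) * F h w) h w)"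
  proof (rule Meq_sum[OF T(1)])
    fix h show "Meq d r ((\<lambda>h w. (1/2) * vact i (m - h) j h p w) h) ((\<lambda>h w. (1/2) * F h w) h)"
      using Meq_smult[OF Vp[of h], of "1/2"] by simp
  qed
  ultimately show ?thesis unfolding L by (auto intro: Meq_trans)
qed

lemma Lop_eval0:
  assumes r: "1 \<le> i" "i \<le> d"
    and pq: "Meq d r p q" and G: "Meq d r (vact i 0 i 0 q) G0"
    and F: "\<And>h. 0 < h \<Longrightarrow> Meq d r (vact i (-h) i h q) (F h)"
    and T: "finite T" "T \<subseteq> {h. 0 < h}" "\<And>h. 0 < h \<Longrightarrow> h \<notin> T \<Longrightarrow> F h = (\<lambda>w. 0)"
  shows "Meq d r (Lop d r i i 0 p) (\<lambda>w. (1/2) * G0 w + (\<Sum>h\<in>T. F h w))"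
proof -
  have Vp: "0 < h \<Longrightarrow> Meq d r (vact i (-h) i h p) (F h)" for h
    using Meq_trans[OF Meq_left[OF pq goodf_Lv[OF r r]] F[unfolded vact_def]] unfolding vact_def .
  have V0: "Meq d r (vact i 0 i 0 p) G0"
    using Meq_trans[OF Meq_left[OF pq goodf_Lv[OF r r]] G[unfolded vact_def]] unfolding vact_def .
  define S where "S = {h. 0 < h \<and> vact i (- h) i h p \<notin> J d r}"
  have ST: "S \<subseteq> T"
  proof
    fix h assume "h \<in> S"
    show "h \<in> T"
    proof (rule ccontr)
      assume "h \<notin> T"
      have "0 < h" using \<open>h \<in> S\<close> S_def by auto
      then have "Meq d r (vact i (-h) i h p) (\<lambda>w. 0)" using Vp[of h] T(3)[of h] \<open>h \<notin> T\<close> by simp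
      then show False using \<open>h \<in> S\<close> by (simp add: Meq_zero_iff S_def)
    qed
  qed
  have L: "Lop d r i i 0 p = (\<lambda>w. (1/2) * vact i 0 i 0 p w + (\<Sum>h\<in>S. vact i (- h) i h p w))"
    by (simp add: Lop_def S_def)
  have "Meq d r (\<lambda>w. \<Sum>h\<in>S. (\<lambda>h. vact i (- h) i h p) h w) (\<lambda>w. \<Sum>h\<in>T. (\<lambda>h. vact i (- h) i h p) h w)"
    by (rule sum_diff_J[OF T(1) ST]) (use T(2) in \<open>auto simp: S_def\<close>)
  moreover have "Meq d r (\<lambda>w. \<Sum>h\<in>T. vact i (- h) i h p w) (\<lambda>w. \<Sum>h\<in>T. F h w)"
    by (rule Meq_sum[OF T(1)]) (use T(2) Vp in auto)
  ultimately have "Meq d r (\<lambda>w. \<Sum>h\<in>S. vact i (- h) i h p w) (\<lambda>w. \<Sum>h\<in>T. F h w)"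
    by (auto intro: Meq_trans)
  then show ?thesis unfolding L by (intro Meq_add Meq_smult V0)
qed


lemma emb_ind2: "emb (\<lambda>g. \<alpha> * ind x g + \<beta> * ind y g) = (\<lambda>w. \<alpha> * gvec x w + \<beta> * gvec y w)"
  by (rule ext) (simp add: emb_def gvec_def ind_def split: list.split)

lemma emb_zero: "emb (\<lambda>g. 0) = (\<lambda>w. 0)"
  by (rule ext) (simp add: emb_def split: list.split)

lemma ind_nrm_Cg: "ind (nrm i a j b) Cg = 0"
  by (simp add: ind_def nrm_def)

lemma vact_one: "vact i a j b one = emb (Lv i a j b)"
  by (simp add: vact_def fmul_one_right)

lemma vact_gvec_one: "\<not> (i = j \<and> a + b = 0 \<and> b < a) \<Longrightarrow> vact i a j b one = gvec (nrm i a j b)"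
  by (simp add: vact_one Lv_nrm gvec_emb)

lemma ACT_smult:
  assumes "1 \<le> i" "i \<le> d" "1 \<le> j" "j \<le> d" "1 \<le> k" "k \<le> d" "1 \<le> l" "l \<le> d"
    and "\<not> (i = j \<and> a + b = 0 \<and> b < a)" and "0 \<le> a \<or> 0 \<le> b"
    and "BR i a j b k c l e Cg = 0"
  shows "Meq d r (vact i a j b (\<lambda>w. z * gvec (nrm k c l e) w)) (\<lambda>w. z * emb (BR i a j b k c l e) w)"
  using Meq_smult[OF ACT[OF assms], where c = z] by (simp add: vact_def fmul_emb_smult)

lemma stepA:
  assumes ij: "i \<noteq> j" and r: "1 \<le> i" "i \<le> d" "1 \<le> j" "j \<le> d"
  shows "Meq d r (Lop d r i j (-2) one) (\<lambda>w. (1/2) * gvec (nrm i (-1) j (-1)) w)"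
proof -
  define F where "F h = (if h = -1 then gvec (nrm i (-1) j (-1)) else (\<lambda>w. 0))" for h :: int
  have "Meq d r (vact i (-2-h) j h one) (F h)" for h
  proof (cases "h = -1")
    case True then show ?thesis using ij by (simp add: F_def vact_gvec_one Meq_refl)
  next
    case False
    have "gvec (nrm i (-2-h) j h) \<in> J d r"
      by (rule gvec_J) (use r False in \<open>auto simp: isB_nrm posB_nrm\<close>)
    then show ?thesis using False ij by (simp add: F_def vact_gvec_one Meq_zero_iff)
  qed
  then have "Meq d r (Lop d r i j (-2) one) (\<lambda>w. \<Sum>h\<in>{-1}. (1/2) * F h w)"
    by (intro Lop_eval1[OF _ r Meq_refl]) (auto simp: F_def)
  then show ?thesis by (simp add: F_def)
qed

lemma BR_J: assumes "i \<noteq> j"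
  shows "BR j (-1-h) j h i a j b = (\<lambda>g. (if h = -b then of_int (-b) else 0) * ind (nrm i a j (b-1)) g
          + (if h = b - 1 then of_int (-b) else 0) * ind (nrm i a j (b-1)) g)"
proof (rule ext)
  fix g
  have "BR j (-1-h) j h i a j b g = (if h + b = 0 then of_int h * Lv j (-1-h) i a g else 0)
      + (if -1 - h + b = 0 then of_int (-1-h) * Lv i a j h g else 0)"
    using assms by (simp add: BR_def hb_def)
  also have "\<dots> = (if h = -b then of_int (-b) else 0) * ind (nrm i a j (b-1)) g
          + (if h = b - 1 then of_int (-b) else 0) * ind (nrm i a j (b-1)) g"
  proof -
    have 1: "h = -b \<Longrightarrow> Lv j (-1-h) i a g = ind (nrm i a j (b-1)) g"
      using assms by (simp add: Lv_nrm nrm_sym)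
    have 2: "h = b - 1 \<Longrightarrow> Lv i a j h g = ind (nrm i a j (b-1)) g"
      using assms by (simp add: Lv_nrm)
    have 3: "h = -b \<Longrightarrow> h \<noteq> b - 1" by presburger
    show ?thesis using 1 2 3 assms by (cases "h = -b"; cases "h = b - 1") (auto simp: algebra_simps)
  qed
  finally show "BR j (-1-h) j h i a j b g = (if h = -b then of_int (-b) else 0) * ind (nrm i a j (b-1)) g
          + (if h = b - 1 then of_int (-b) else 0) * ind (nrm i a j (b-1)) g" .
qed

lemma stepJ:
  assumes ij: "i \<noteq> j" and r: "1 \<le> i" "i \<le> d" "1 \<le> j" "j \<le> d" and ab: "a < 0" "b < 0"
    and P: "Meq d r p (\<lambda>w. c * gvec (nrm i a j b) w)"
  shows "Meq d r (Lop d r j j (-1) p) (\<lambda>w. (c * of_int (-b)) * gvec (nrm i a j (b-1)) w)"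
proof -
  define X where "X = nrm i a j (b-1)"
  define F where "F h = (\<lambda>w. c * ((if h = -b then of_int (-b) else 0) * gvec X w
          + (if h = b - 1 then of_int (-b) else 0) * gvec X w))" for h :: int
  have "Meq d r (vact j (-1-h) j h (\<lambda>w. c * gvec (nrm i a j b) w)) (F h)" for h
  proof -
    have cg: "BR j (-1-h) j h i a j b Cg = 0" using ij by (simp add: BR_J ind_nrm_Cg)
    have "Meq d r (vact j (-1-h) j h (\<lambda>w. c * gvec (nrm i a j b) w)) (\<lambda>w. c * emb (BR j (-1-h) j h i a j b) w)"
      by (rule ACT_smult) (use r cg in auto)
    then show ?thesis using ij by (simp add: BR_J emb_ind2 F_def X_def)
  qed
  then have "Meq d r (Lop d r j j (-1) p) (\<lambda>w. \<Sum>h\<in>{-b, b-1}. (1/2) * F h w)"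
    by (intro Lop_eval1[OF _ r(3,4,3,4) P]) (auto simp: F_def)
  moreover have "(\<lambda>w. \<Sum>h\<in>{-b, b-1}. (1/2) * F h w) = (\<lambda>w. (c * of_int (-b)) * gvec X w)"
    using ab by (intro ext) (simp add: F_def algebra_simps)
  ultimately show ?thesis by (simp add: X_def)
qed

lemma BR_X: assumes "i \<noteq> j" "n < 0" "b < 0"
  shows "BR i (-1-h) j h i n j b = (\<lambda>g. (if h = -b then of_int (-b) else 0) * ind (nrm i (b-1) i n) g
          + (if h = n - 1 then of_int (-n) else 0) * ind (nrm j b j (n-1)) g)"
proof (rule ext)
  fix g
  have "BR i (-1-h) j h i n j b g = (if h + b = 0 then of_int h * Lv i (-1-h) i n g else 0)
      + (if -1 - h + n = 0 then of_int (-1-h) * Lv j b j h g else 0)"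
    using assms by (simp add: BR_def hb_def)
  also have "\<dots> = (if h = -b then of_int (-b) else 0) * ind (nrm i (b-1) i n) g
          + (if h = n - 1 then of_int (-n) else 0) * ind (nrm j b j (n-1)) g"
  proof -
    have 1: "h = -b \<Longrightarrow> Lv i (-1-h) i n g = ind (nrm i (b-1) i n) g"
      using assms by (simp add: Lv_nrm)
    have 2: "h = n - 1 \<Longrightarrow> Lv j b j h g = ind (nrm j b j (n-1)) g"
      using assms by (simp add: Lv_nrm)
    show ?thesis using 1 2 assms by (cases "h = -b"; cases "h = n - 1") (auto simp: algebra_simps)
  qed
  finally show "BR i (-1-h) j h i n j b g = (if h = -b then of_int (-b) else 0) * ind (nrm i (b-1) i n) g
          + (if h = n - 1 then of_int (-n) else 0) * ind (nrm j b j (n-1)) g" .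
qed

lemma stepX:
  assumes ij: "i \<noteq> j" and r: "1 \<le> i" "i \<le> d" "1 \<le> j" "j \<le> d" and nb: "n < 0" "b < 0"
    and P: "Meq d r p (\<lambda>w. c * gvec (nrm i n j b) w)"
  shows "Meq d r (Lop d r i j (-1) p) (\<lambda>w. (c/2) * (of_int (-b) * gvec (nrm i (b-1) i n) w
            + of_int (-n) * gvec (nrm j b j (n-1)) w))"
proof -
  define X where "X = nrm i (b-1) i n"
  define Y where "Y = nrm j b j (n-1)"
  define F where "F h = (\<lambda>w. c * ((if h = -b then of_int (-b) else 0) * gvec X w
          + (if h = n - 1 then of_int (-n) else 0) * gvec Y w))" for h :: int
  have "Meq d r (vact i (-1-h) j h (\<lambda>w. c * gvec (nrm i n j b) w)) (F h)" for h
  proof -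
    have cg: "BR i (-1-h) j h i n j b Cg = 0" using ij nb by (simp add: BR_X ind_nrm_Cg)
    have "Meq d r (vact i (-1-h) j h (\<lambda>w. c * gvec (nrm i n j b) w)) (\<lambda>w. c * emb (BR i (-1-h) j h i n j b) w)"
      by (rule ACT_smult) (use r cg ij in auto)
    then show ?thesis using ij nb by (simp add: BR_X emb_ind2 F_def X_def Y_def)
  qed
  then have "Meq d r (Lop d r i j (-1) p) (\<lambda>w. \<Sum>h\<in>{-b, n-1}. (1/2) * F h w)"
    by (intro Lop_eval1[OF _ r P]) (auto simp: F_def)
  moreover have "(\<lambda>w. \<Sum>h\<in>{-b, n-1}. (1/2) * F h w) = (\<lambda>w. (c/2) * (of_int (-b) * gvec X w
            + of_int (-n) * gvec Y w))"
    using nb by (intro ext) (simp add: F_def algebra_simps)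
  ultimately show ?thesis by (simp add: X_def Y_def)
qed

lemma BR_0: assumes "0 < h" "m < 0" "n < 0"
  shows "BR i (-h) i h i m i n = (\<lambda>g. (if h = -m then of_int (-m) else 0) * ind (nrm i m i n) g
          + (if h = -n then of_int (-n) else 0) * ind (nrm i m i n) g)"
proof (rule ext)
  fix g
  have "BR i (-h) i h i m i n g = (if h + m = 0 then of_int h * Lv i (-h) i n g else 0)
      + (if h + n = 0 then of_int h * Lv i (-h) i m g else 0)"
    using assms by (simp add: BR_def hb_def)
  also have "\<dots> = (if h = -m then of_int (-m) else 0) * ind (nrm i m i n) g
          + (if h = -n then of_int (-n) else 0) * ind (nrm i m i n) g"
  proof -
    have 1: "h = -m \<Longrightarrow> Lv i (-h) i n g = ind (nrm i m i n) g"
      using assms by (simp add: Lv_nrm)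
    have 2: "h = -n \<Longrightarrow> Lv i (-h) i m g = ind (nrm i m i n) g"
      using assms by (simp add: Lv_nrm nrm_sym)
    show ?thesis using 1 2 assms by (cases "h = -m"; cases "h = -n") (auto simp: algebra_simps)
  qed
  finally show "BR i (-h) i h i m i n g = (if h = -m then of_int (-m) else 0) * ind (nrm i m i n) g
          + (if h = -n then of_int (-n) else 0) * ind (nrm i m i n) g" .
qed

lemma BR_ij0: "i \<noteq> j \<Longrightarrow> BR i a i b j c j e = (\<lambda>g. 0)"
  by (rule ext) (simp add: BR_def hb_def)

lemma BR_000: "BR i 0 i 0 k c l e = (\<lambda>g. 0)"
  by (rule ext) (simp add: BR_def hb_def)

lemma step0:
  assumes ij: "i \<noteq> j" and r: "1 \<le> i" "i \<le> d" "1 \<le> j" "j \<le> d" and mn: "m < 0" "n < 0"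
    and P: "Meq d r p (\<lambda>w. c1 * gvec (nrm i m i n) w + c2 * gvec (nrm j b j e) w)"
  shows "Meq d r (Lop d r i i 0 p) (\<lambda>w. (c1 * of_int (-m-n)) * gvec (nrm i m i n) w)"
proof -
  define X where "X = nrm i m i n"
  define q where "q = (\<lambda>w. c1 * gvec (nrm i m i n) w + c2 * gvec (nrm j b j e) w)"
  define F where "F h = (\<lambda>w. c1 * ((if h = -m then of_int (-m) else 0) * gvec X w
          + (if h = -n then of_int (-n) else 0) * gvec X w) + c2 * 0)" for h :: int
  have vq: "vact i a i b' q = (\<lambda>w. vact i a i b' (\<lambda>w. c1 * gvec (nrm i m i n) w) w
         + vact i a i b' (\<lambda>w. c2 * gvec (nrm j b j e) w) w)" for a b'
    by (simp add: q_def vact_def fmul_emb_add)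
  have G: "Meq d r (vact i 0 i 0 q) (\<lambda>w. c1 * 0 + c2 * 0)"
  proof -
    have "Meq d r (vact i 0 i 0 q) (\<lambda>w. c1 * emb (BR i 0 i 0 i m i n) w + c2 * emb (BR i 0 i 0 j b j e) w)"
      unfolding vq by (intro Meq_add ACT_smult) (use r in \<open>auto simp: BR_000\<close>)
    then show ?thesis by (simp add: BR_000 emb_zero)
  qed
  have FF: "Meq d r (vact i (-h) i h q) (F h)" if h: "0 < h" for h
  proof -
    have "Meq d r (vact i (-h) i h q) (\<lambda>w. c1 * emb (BR i (-h) i h i m i n) w + c2 * emb (BR i (-h) i h j b j e) w)"
      unfolding vq by (intro Meq_add ACT_smult) (use r h mn ij in \<open>auto simp: BR_0 BR_ij0 ind_nrm_Cg\<close>)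
    then show ?thesis using h mn ij by (simp add: BR_0 BR_ij0 emb_zero emb_ind2 F_def X_def)
  qed
  have "Meq d r (Lop d r i i 0 p) (\<lambda>w. (1/2) * (c1 * 0 + c2 * 0) + (\<Sum>h\<in>{-m, -n}. F h w))"
    by (rule Lop_eval0[OF r(1,2) P[folded q_def] G FF]) (use mn in \<open>auto simp: F_def\<close>)
  moreover have "(\<lambda>w. (1/2) * (c1 * 0 + c2 * 0) + (\<Sum>h\<in>{-m, -n}. F h w)) = (\<lambda>w. (c1 * of_int (-m-n)) * gvec X w)"
  proof (rule ext)
    fix w show "(1/2) * (c1 * 0 + c2 * 0) + (\<Sum>h\<in>{-m, -n}. F h w) = (c1 * of_int (-m-n)) * gvec X w"
      by (cases "m = n") (simp_all add: F_def algebra_simps)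
  qed
  ultimately show ?thesis by (simp add: X_def)
qed


lemma iterJ:
  assumes ij: "i \<noteq> j" and r: "1 \<le> i" "i \<le> d" "1 \<le> j" "j \<le> d" and a: "a < 0"
    and c: "c \<noteq> 0" and P: "Meq d r P (\<lambda>w. c * gvec (nrm i a j (-1)) w)"
  shows "\<exists>c'. c' \<noteq> 0 \<and> Meq d r ((Lop d r j j (-1) ^^ k) P) (\<lambda>w. c' * gvec (nrm i a j (-1 - int k)) w)"
proof (induction k)
  case 0 then show ?case using c P by auto
next
  case (Suc k)
  then obtain c' where c': "c' \<noteq> 0" "Meq d r ((Lop d r j j (-1) ^^ k) P) (\<lambda>w. c' * gvec (nrm i a j (-1 - int k)) w)"
    by blast
  have "Meq d r (Lop d r j j (-1) ((Lop d r j j (-1) ^^ k) P)) (\<lambda>w. (c' * of_int (-(-1 - int k))) * gvec (nrm i a j ((-1 - int k) - 1)) w)"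
    by (rule stepJ[OF ij r a _ c'(2)]) simp
  moreover have "(-1 - int k) - 1 = -1 - int (Suc k)" by simp
  moreover have "c' * of_int (-(-1 - int k)) \<noteq> 0" using c'(1)
    by (simp del: of_int_minus of_int_diff minus_diff_eq)
  ultimately show ?case by (intro exI[of _ "c' * of_int (-(-1 - int k))"]) simp
qed

lemma iterI:
  assumes ij: "i \<noteq> j" and r: "1 \<le> i" "i \<le> d" "1 \<le> j" "j \<le> d" and b: "b < 0"
    and c: "c \<noteq> 0" and P: "Meq d r P (\<lambda>w. c * gvec (nrm i (-1) j b) w)"
  shows "\<exists>c'. c' \<noteq> 0 \<and> Meq d r ((Lop d r i i (-1) ^^ k) P) (\<lambda>w. c' * gvec (nrm i (-1 - int k) j b) w)"
proof (induction k)
  case 0 then show ?case using c P by auto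
next
  case (Suc k)
  then obtain c' where c': "c' \<noteq> 0" "Meq d r ((Lop d r i i (-1) ^^ k) P) (\<lambda>w. c' * gvec (nrm j b i (-1 - int k)) w)"
    by (auto simp: nrm_sym)
  have "Meq d r (Lop d r i i (-1) ((Lop d r i i (-1) ^^ k) P)) (\<lambda>w. (c' * of_int (-(-1 - int k))) * gvec (nrm j b i ((-1 - int k) - 1)) w)"
    by (rule stepJ[OF ij[symmetric] r(3,4,1,2) b _ c'(2)]) simp
  moreover have "(-1 - int k) - 1 = -1 - int (Suc k)" by simp
  moreover have "c' * of_int (-(-1 - int k)) \<noteq> 0" using c'(1)
    by (simp del: of_int_minus of_int_diff minus_diff_eq)
  ultimately show ?case by (intro exI[of _ "c' * of_int (-(-1 - int k))"]) (simp add: nrm_sym)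
qed

theorem lemma3p3:
  fixes d :: nat and r :: complex
  assumes "2 \<le> d"
  shows "(\<forall>i j (m::int) (n::int). 1 \<le> i \<and> i \<le> d \<and> 1 \<le> j \<and> j \<le> d \<and> i \<noteq> j \<and> m < 0 \<and> n < 0 \<longrightarrow>
           (\<exists>\<alpha>::complex. \<alpha> \<noteq> 0 \<and>
              Meq d r (vact i m j n one)
                (\<lambda>w. \<alpha> * ((Lop d r i i (-1) ^^ nat (- m - 1))
                          ((Lop d r j j (-1) ^^ nat (- n - 1))
                            (Lop d r i j (-2) one))) w)))
       \<and> (\<forall>i (m::int) (n::int). 1 \<le> i \<and> i \<le> d \<and> m < 0 \<and> n < 0 \<and> m \<le> -2 \<longrightarrow>
           (\<forall>j. 1 \<le> j \<and> j \<le> d \<and> j \<noteq> i \<longrightarrow>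
             (\<exists>\<beta>::complex. \<beta> \<noteq> 0 \<and>
                Meq d r (vact i m i n one)
                  (\<lambda>w. \<beta> * (Lop d r i i 0
                             (Lop d r i j (-1)
                               ((Lop d r i i (-1) ^^ nat (- n - 1))
                                 ((Lop d r j j (-1) ^^ nat (- m - 2))
                                   (Lop d r i j (-2) one))))) w))))"
  proof (intro conjI allI impI)
  fix i j :: nat and m n :: int
  assume h: "1 \<le> i \<and> i \<le> d \<and> 1 \<le> j \<and> j \<le> d \<and> i \<noteq> j \<and> m < 0 \<and> n < 0"
  then have ij: "i \<noteq> j" and r: "1 \<le> i" "i \<le> d" "1 \<le> j" "j \<le> d" and mn: "m < 0" "n < 0" by auto
  have A: "Meq d r (Lop d r i j (-2) one) (\<lambda>w. (1/2) * gvec (nrm i (-1) j (-1)) w)"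
    by (rule stepA[OF ij r])
  obtain c1 where c1: "c1 \<noteq> 0" "Meq d r ((Lop d r j j (-1) ^^ nat (- n - 1)) (Lop d r i j (-2) one))
        (\<lambda>w. c1 * gvec (nrm i (-1) j (-1 - int (nat (- n - 1)))) w)"
    using iterJ[OF ij r _ _ A, of "nat (- n - 1)"] by auto
  have e1: "-1 - int (nat (- n - 1)) = n" using mn by simp
  obtain c2 where c2: "c2 \<noteq> 0" "Meq d r ((Lop d r i i (-1) ^^ nat (- m - 1)) ((Lop d r j j (-1) ^^ nat (- n - 1)) (Lop d r i j (-2) one)))
        (\<lambda>w. c2 * gvec (nrm i (-1 - int (nat (- m - 1))) j n) w)"
    using iterI[OF ij r mn(2) c1(1) c1(2)[unfolded e1], of "nat (- m - 1)"] by auto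
  have e2: "-1 - int (nat (- m - 1)) = m" using mn by simp
  define R where "R = (Lop d r i i (-1) ^^ nat (- m - 1)) ((Lop d r j j (-1) ^^ nat (- n - 1)) (Lop d r i j (-2) one))"
  have "Meq d r (\<lambda>w. (1/c2) * R w) (\<lambda>w. (1/c2) * (c2 * gvec (nrm i m j n) w))"
    using Meq_smult[OF c2(2)[unfolded e2 R_def[symmetric]]] .
  then have "Meq d r (\<lambda>w. (1/c2) * R w) (vact i m j n one)"
    using c2(1) ij by (simp add: vact_gvec_one)
  then show "\<exists>\<alpha>::complex. \<alpha> \<noteq> 0 \<and> Meq d r (vact i m j n one) (\<lambda>w. \<alpha> * R w)"
    using c2(1) by (intro exI[of _ "1/c2"]) (auto intro: Meq_sym)
next
  fix i j :: nat and m n :: int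
  assume h1: "1 \<le> i \<and> i \<le> d \<and> m < 0 \<and> n < 0 \<and> m \<le> -2" and h2: "1 \<le> j \<and> j \<le> d \<and> j \<noteq> i"
  then have ij: "i \<noteq> j" and r: "1 \<le> i" "i \<le> d" "1 \<le> j" "j \<le> d" and mn: "m < 0" "n < 0" "m \<le> -2" by auto
  have A: "Meq d r (Lop d r i j (-2) one) (\<lambda>w. (1/2) * gvec (nrm i (-1) j (-1)) w)"
    by (rule stepA[OF ij r])
  obtain c1 where c1: "c1 \<noteq> 0" "Meq d r ((Lop d r j j (-1) ^^ nat (- m - 2)) (Lop d r i j (-2) one))
        (\<lambda>w. c1 * gvec (nrm i (-1) j (-1 - int (nat (- m - 2)))) w)"
    using iterJ[OF ij r _ _ A, of "nat (- m - 2)"] by auto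
  have e1: "-1 - int (nat (- m - 2)) = m + 1" using mn by simp
  have m1: "m + 1 < 0" using mn by simp
  obtain c2 where c2: "c2 \<noteq> 0" "Meq d r ((Lop d r i i (-1) ^^ nat (- n - 1)) ((Lop d r j j (-1) ^^ nat (- m - 2)) (Lop d r i j (-2) one)))
        (\<lambda>w. c2 * gvec (nrm i (-1 - int (nat (- n - 1))) j (m + 1)) w)"
    using iterI[OF ij r m1 c1(1) c1(2)[unfolded e1], of "nat (- n - 1)"] by auto
  have e2: "-1 - int (nat (- n - 1)) = n" using mn by simp
  define R where "R = (Lop d r i i (-1) ^^ nat (- n - 1)) ((Lop d r j j (-1) ^^ nat (- m - 2)) (Lop d r i j (-2) one))"
  have X: "Meq d r (Lop d r i j (-1) R) (\<lambda>w. (c2/2) * (of_int (-(m+1)) * gvec (nrm i (m+1-1) i n) w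
            + of_int (-n) * gvec (nrm j (m+1) j (n-1)) w))"
    by (rule stepX[OF ij r mn(2) m1 c2(2)[unfolded e2 R_def[symmetric]]])
  define k1 where "k1 = (c2/2) * of_int (-(m+1))"
  have X': "Meq d r (Lop d r i j (-1) R) (\<lambda>w. k1 * gvec (nrm i m i n) w + ((c2/2) * of_int (-n)) * gvec (nrm j (m+1) j (n-1)) w)"
  proof -
    have "(\<lambda>w. (c2/2) * (of_int (-(m+1)) * gvec (nrm i (m+1-1) i n) w
            + of_int (-n) * gvec (nrm j (m+1) j (n-1)) w)) = (\<lambda>w. k1 * gvec (nrm i m i n) w + ((c2/2) * of_int (-n)) * gvec (nrm j (m+1) j (n-1)) w)"
      by (rule ext) (simp add: k1_def field_simps)
    then show ?thesis using X by simp
  qed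
  have Z: "Meq d r (Lop d r i i 0 (Lop d r i j (-1) R)) (\<lambda>w. (k1 * of_int (-m-n)) * gvec (nrm i m i n) w)"
    by (rule step0[OF ij r mn(1,2) X'])
  have a1: "(of_int (-(m+1)) :: complex) \<noteq> 0" by (subst of_int_eq_0_iff) (use mn in simp)
  have a2: "(of_int (-m-n) :: complex) \<noteq> 0" by (subst of_int_eq_0_iff) (use mn in simp)
  have k: "k1 * of_int (-m-n) \<noteq> 0" unfolding k1_def
    by (metis a1 a2 c2(1) divide_eq_0_iff mult_eq_0_iff zero_neq_numeral)
  have "Meq d r (\<lambda>w. (1/(k1 * of_int (-m-n))) * Lop d r i i 0 (Lop d r i j (-1) R) w) (\<lambda>w. (1/(k1 * of_int (-m-n))) * ((k1 * of_int (-m-n)) * gvec (nrm i m i n) w))"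
    using Meq_smult[OF Z] .
  then have "Meq d r (\<lambda>w. (1/(k1 * of_int (-m-n))) * Lop d r i i 0 (Lop d r i j (-1) R) w) (vact i m i n one)"
    using k mn by (simp add: vact_gvec_one)
  then show "\<exists>\<beta>::complex. \<beta> \<noteq> 0 \<and> Meq d r (vact i m i n one) (\<lambda>w. \<beta> * Lop d r i i 0 (Lop d r i j (-1) R) w)"
    using k by (intro exI[of _ "1/(k1 * of_int (-m-n))"]) (auto intro: Meq_sym)
qed


end
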